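(* Let $G=(V,E)$ be a doubly stochasticable strongly connected digraph. Then $\max\{\max_{v\in V}d_{\mathrm{out}}(v),\max_{v\in V}d_{\mathrm{in}}(v)\}\leq\operatorname{ds}(G)\leq|E|-|V|+1.$
   Context: A digraph $G=(V,E)$, $V=\{v_1,\dots,v_n\}$, $E\subseteq V\times V$ (self-loops allowed); $d_{\mathrm{out}}(v)$ and $d_{\mathrm{in}}(v)$ are the numbers of out-neighbors and in-neighbors of $v$. Strongly connected means a directed path exists between every ordered pair of distinct vertices. $G$ is doubly stochasticable if it admits $A\in\mathbb{R}^{n\times n}_{\geq0}$ with $a_{ij}>0$ iff $(v_i,v_j)\in E$ and all row and column sums equal $1$. A cycle is a directed path $v_{i_1},\dots,v_{i_k},v_{i_1}$ with distinct $v_{i_1},\dots,v_{i_k}$ (self-loops are cycles), viewed as a subdigraph; $\mathcal{C}(G)$ is the set of subdigraphs that are a single edgeless vertex, a cycle, or a union of pairwise vertex-disjoint cycles; a family generates $G$ if the union of vertex sets is $V$ and of edge sets is $E$. The DS-character $\operatorname{ds}(G)$ is the minimum cardinality of a subset of $\mathcal{C}(G)$ generating $G$ all of whose elements contain every vertex of $G$. *)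

theory Defs
  imports Complex_Main
begin

text \<open>Subdigraphs are pairs (W, F) of a vertex set and an edge set.\<close>

definition digraph :: "'a set \<Rightarrow> ('a \<times> 'a) set \<Rightarrow> bool" where
  "digraph V E \<longleftrightarrow> finite V \<and> E \<subseteq> V \<times> V"

definition d_out :: "'a set \<Rightarrow> ('a \<times> 'a) set \<Rightarrow> 'a \<Rightarrow> nat" where
  "d_out V E v = card {w \<in> V. (v, w) \<in> E}"

definition d_in :: "'a set \<Rightarrow> ('a \<times> 'a) set \<Rightarrow> 'a \<Rightarrow> nat" where
  "d_in V E v = card {w \<in> V. (w, v) \<in> E}"

definition strongly_connected :: "'a set \<Rightarrow> ('a \<times> 'a) set \<Rightarrow> bool" where
  "strongly_connected V E \<longleftrightarrow> (\<forall>u\<in>V. \<forall>v\<in>V. u \<noteq> v \<longrightarrow> (u, v) \<in> E\<^sup>+)"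

definition doubly_stochasticable :: "'a set \<Rightarrow> ('a \<times> 'a) set \<Rightarrow> bool" where
  "doubly_stochasticable V E \<longleftrightarrow>
     (\<exists>A :: 'a \<Rightarrow> 'a \<Rightarrow> real.
        (\<forall>u\<in>V. \<forall>v\<in>V. A u v \<ge> 0 \<and> (A u v > 0 \<longleftrightarrow> (u, v) \<in> E)) \<and>
        (\<forall>u\<in>V. (\<Sum>v\<in>V. A u v) = 1) \<and>
        (\<forall>v\<in>V. (\<Sum>u\<in>V. A u v) = 1))"

definition cycle_edges :: "'a list \<Rightarrow> ('a \<times> 'a) set" where
  "cycle_edges vs = set (zip vs (tl vs @ [hd vs]))"

text \<open>A list of distinct vertices forming a cycle of G (self-loops = length 1).\<close>
definition is_cycle :: "'a set \<Rightarrow> ('a \<times> 'a) set \<Rightarrow> 'a list \<Rightarrow> bool" where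
  "is_cycle V E vs \<longleftrightarrow> vs \<noteq> [] \<and> distinct vs \<and> set vs \<subseteq> V \<and> cycle_edges vs \<subseteq> E"

text \<open>The set C(G): a single edgeless vertex, a cycle, or a union of pairwise
vertex-disjoint cycles (a single cycle is the case of a one-element family).\<close>
definition cycle_subgraphs :: "'a set \<Rightarrow> ('a \<times> 'a) set \<Rightarrow> ('a set \<times> ('a \<times> 'a) set) set" where
  "cycle_subgraphs V E =
     {({v}, {}) | v. v \<in> V} \<union>
     {(\<Union>c\<in>set cs. set c, \<Union>c\<in>set cs. cycle_edges c) | cs.
        cs \<noteq> [] \<and> (\<forall>c\<in>set cs. is_cycle V E c) \<and>
        (\<forall>i<length cs. \<forall>j<length cs. i \<noteq> j \<longrightarrow> set (cs ! i) \<inter> set (cs ! j) = {})}"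

definition generates :: "'a set \<Rightarrow> ('a \<times> 'a) set \<Rightarrow> ('a set \<times> ('a \<times> 'a) set) set \<Rightarrow> bool" where
  "generates V E S \<longleftrightarrow> (\<Union>(fst ` S) = V) \<and> (\<Union>(snd ` S) = E)"

definition ds :: "'a set \<Rightarrow> ('a \<times> 'a) set \<Rightarrow> nat" where
  "ds V E = (LEAST n. \<exists>S. S \<subseteq> cycle_subgraphs V E \<and> finite S \<and> card S = n \<and>
                          generates V E S \<and> (\<forall>H\<in>S. fst H = V))"

end

theory Submission
  imports Defs "HOL-Combinatorics.Cycles"
begin


lemma hall:
  fixes N :: "'i \<Rightarrow> 'b set"
  assumes "finite I" "\<forall>i\<in>I. finite (N i)" "\<forall>X\<subseteq>I. card X \<le> card (\<Union>(N ` X))"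
  shows "\<exists>f. inj_on f I \<and> (\<forall>i\<in>I. f i \<in> N i)"
using assms
proof (induction "card I" arbitrary: I N rule: less_induct)
  case less
  show ?case
  proof (cases "I = {}")
    case True then show ?thesis by auto
  next
    case False
    show ?thesis
    proof (cases "\<exists>X. X \<subseteq> I \<and> X \<noteq> {} \<and> X \<noteq> I \<and> card (\<Union>(N`X)) = card X")
      case True
      then obtain X where X: "X \<subseteq> I" "X \<noteq> {}" "X \<noteq> I" "card (\<Union>(N`X)) = card X" by blast
      have fX: "finite X" using less.prems(1) X(1) finite_subset by blast
      have "X \<subset> I" using X(1,3) by blast
      hence "card X < card I" using less.prems(1) by (simp add: psubset_card_mono)
      have h1: "\<forall>i\<in>X. finite (N i)" using less.prems(2) X(1) by blast
      have h2: "\<forall>Y\<subseteq>X. card Y \<le> card (\<Union>(N ` Y))" using less.prems(3) X(1) by blast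
      from less.hyps[OF \<open>card X < card I\<close> fX h1 h2] obtain f1 where f1: "inj_on f1 X" "\<forall>i\<in>X. f1 i \<in> N i"
        by blast
      define U where "U = \<Union>(N`X)"
      have fU: "finite U" unfolding U_def using fX X(1) less.prems(2) by auto
      define N2 where "N2 = (\<lambda>i. N i - U)"
      have "I - X \<subset> I" using X(1,2) by blast
      hence cJ: "card (I - X) < card I" using less.prems(1) by (simp add: psubset_card_mono)
      have "\<forall>Y\<subseteq>I - X. card Y \<le> card (\<Union>(N2 ` Y))"
      proof (intro allI impI)
        fix Y assume Y: "Y \<subseteq> I - X"
        have fY: "finite Y" using Y less.prems(1) finite_subset by blast
        have eq: "\<Union>(N2 ` Y) = \<Union>(N ` (Y \<union> X)) - U" unfolding N2_def U_def by auto
        have sub: "U \<subseteq> \<Union>(N ` (Y \<union> X))" unfolding U_def by auto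
        have "card (\<Union>(N2 ` Y)) = card (\<Union>(N ` (Y \<union> X))) - card U"
          unfolding eq by (rule card_Diff_subset[OF fU sub])
        moreover have "card (Y \<union> X) \<le> card (\<Union>(N ` (Y \<union> X)))"
        proof -
          have "Y \<union> X \<subseteq> I" using Y X(1) by blast
          thus ?thesis using less.prems(3) by blast
        qed
        moreover have "card (Y \<union> X) = card Y + card X"
          using Y fY fX by (subst card_Un_disjoint) auto
        ultimately show "card Y \<le> card (\<Union>(N2 ` Y))" using X(4) U_def by simp
      qed
      moreover have "\<forall>i\<in>I - X. finite (N2 i)" using less.prems(2) N2_def by auto
      ultimately obtain f2 where f2: "inj_on f2 (I - X)" "\<forall>i\<in>I - X. f2 i \<in> N2 i"
        using less.hyps[OF cJ] less.prems(1) by blast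
      define f where "f = (\<lambda>i. if i \<in> X then f1 i else f2 i)"
      have "\<forall>i\<in>I. f i \<in> N i" using f1 f2 unfolding f_def N2_def by auto
      moreover have "inj_on f I"
      proof (rule inj_onI)
        fix a b assume ab: "a \<in> I" "b \<in> I" "f a = f b"
        have u1: "\<forall>i\<in>X. f1 i \<in> U" using f1 U_def by auto
        have u2: "\<forall>i\<in>I - X. f2 i \<notin> U" using f2 N2_def by auto
        show "a = b"
          using ab u1 u2 f1(1) f2(1) unfolding f_def inj_on_def
          by (smt (verit) DiffI)
      qed
      ultimately show ?thesis by blast
    next
      case False2: False
      obtain i0 where i0: "i0 \<in> I" using False by blast
      have "card {i0} \<le> card (N i0)" using less.prems(3) i0 by (metis empty_subsetI image_empty image_insert insert_subset cSup_singleton)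
      hence "N i0 \<noteq> {}" by auto
      then obtain y where y: "y \<in> N i0" by blast
      define N2 where "N2 = (\<lambda>i. N i - {y})"
      have cJ: "card (I - {i0}) < card I" using i0 less.prems(1) by (rule card_Diff1_less[rotated])
      have "\<forall>Y\<subseteq>I - {i0}. card Y \<le> card (\<Union>(N2 ` Y))"
      proof (intro allI impI)
        fix Y assume Y: "Y \<subseteq> I - {i0}"
        show "card Y \<le> card (\<Union>(N2 ` Y))"
        proof (cases "Y = {}")
          case True then show ?thesis by simp
        next
          case False
          have fin: "finite (\<Union>(N ` Y))" using Y less.prems(1,2) by (meson Diff_subset finite_UN_I finite_subset subset_iff)
          have "Y \<noteq> I" using Y i0 by auto
          hence "card (\<Union>(N ` Y)) \<noteq> card Y" using False2 False Y by blast
          moreover have "card Y \<le> card (\<Union>(N ` Y))" using less.prems(3) Y by auto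
          moreover have "\<Union>(N2 ` Y) = \<Union>(N ` Y) - {y}" unfolding N2_def by auto
          moreover have "card (\<Union>(N ` Y) - {y}) \<ge> card (\<Union>(N ` Y)) - 1"
            using fin by (metis card_Diff_singleton card_Diff_singleton_if diff_le_self le_refl)
          ultimately show ?thesis by simp
        qed
      qed
      moreover have "\<forall>i\<in>I - {i0}. finite (N2 i)" using less.prems(2) N2_def by auto
      ultimately obtain f2 where f2: "inj_on f2 (I - {i0})" "\<forall>i\<in>I - {i0}. f2 i \<in> N2 i"
        using less.hyps[OF cJ] less.prems(1) by blast
      define f where "f = f2(i0 := y)"
      have "\<forall>i\<in>I. f i \<in> N i" using f2 y unfolding f_def N2_def by auto
      moreover have "inj_on f I"
        using f2 unfolding f_def N2_def inj_on_def by (metis Diff_iff fun_upd_apply insertI1 singletonD)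
      ultimately show ?thesis by blast
    qed
  qed
qed



lemma ce_alt: "cycle_edges c = set (zip c (rotate1 c))"
  by (cases c) (simp_all add: cycle_edges_def)

lemma ce_unique_succ:
  assumes "distinct c" "(a,b) \<in> cycle_edges c" "(a,b') \<in> cycle_edges c"
  shows "b = b'"
  using assms unfolding ce_alt in_set_zip
  by (metis fst_conv length_rotate1 nth_eq_iff_index_eq snd_conv)

lemma ce_unique_pred:
  assumes "distinct c" "(a,b) \<in> cycle_edges c" "(a',b) \<in> cycle_edges c"
  shows "a = a'"
proof -
  have "distinct (rotate1 c)" using assms(1) by simp
  thus ?thesis using assms unfolding ce_alt in_set_zip
    by (metis fst_conv length_rotate1 nth_eq_iff_index_eq snd_conv)
qed

lemma ce_mem:
  assumes "(a,b) \<in> cycle_edges c" shows "a \<in> set c" "b \<in> set c"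
  using assms unfolding ce_alt by (auto dest: set_zip_leftD set_zip_rightD)

lemma cs_succ_unique:
  assumes "H \<in> cycle_subgraphs V E" "(a,b) \<in> snd H" "(a,b') \<in> snd H"
  shows "b = b'"
proof -
  from assms(1) consider "snd H = {}" | cs where "H = (\<Union>c\<in>set cs. set c, \<Union>c\<in>set cs. cycle_edges c)"
        "\<forall>c\<in>set cs. is_cycle V E c"
        "\<forall>i<length cs. \<forall>j<length cs. i \<noteq> j \<longrightarrow> set (cs ! i) \<inter> set (cs ! j) = {}"
    unfolding cycle_subgraphs_def by auto
  then show ?thesis
  proof cases
    case 1 then show ?thesis using assms by auto
  next
    case 2
    obtain i where i: "i < length cs" "(a,b) \<in> cycle_edges (cs!i)" using assms(2) 2(1)
      by (auto simp: in_set_conv_nth)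
    obtain j where j: "j < length cs" "(a,b') \<in> cycle_edges (cs!j)" using assms(3) 2(1)
      by (auto simp: in_set_conv_nth)
    have "i = j" using ce_mem(1)[OF i(2)] ce_mem(1)[OF j(2)] 2(3) i(1) j(1) by blast
    moreover have "distinct (cs!i)" using 2(2) i(1) nth_mem unfolding is_cycle_def by blast
    ultimately show ?thesis using ce_unique_succ i j by metis
  qed
qed

lemma cs_pred_unique:
  assumes "H \<in> cycle_subgraphs V E" "(a,b) \<in> snd H" "(a',b) \<in> snd H"
  shows "a = a'"
proof -
  from assms(1) consider "snd H = {}" | cs where "H = (\<Union>c\<in>set cs. set c, \<Union>c\<in>set cs. cycle_edges c)"
        "\<forall>c\<in>set cs. is_cycle V E c"
        "\<forall>i<length cs. \<forall>j<length cs. i \<noteq> j \<longrightarrow> set (cs ! i) \<inter> set (cs ! j) = {}"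
    unfolding cycle_subgraphs_def by auto
  then show ?thesis
  proof cases
    case 1 then show ?thesis using assms by auto
  next
    case 2
    obtain i where i: "i < length cs" "(a,b) \<in> cycle_edges (cs!i)" using assms(2) 2(1)
      by (auto simp: in_set_conv_nth)
    obtain j where j: "j < length cs" "(a',b) \<in> cycle_edges (cs!j)" using assms(3) 2(1)
      by (auto simp: in_set_conv_nth)
    have "i = j" using ce_mem(2)[OF i(2)] ce_mem(2)[OF j(2)] 2(3) i(1) j(1) by blast
    moreover have "distinct (cs!i)" using 2(2) i(1) nth_mem unfolding is_cycle_def by blast
    ultimately show ?thesis using ce_unique_pred i j by metis
  qed
qed

lemma ce_support:
  assumes "permutation p"
  shows "cycle_edges (support p a) = (\<lambda>x. (x, p x)) ` set (support p a)"
proof -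
  define k where "k = least_power p a"
  have k: "k > 0" "(p ^^ k) a = a" using least_power_of_permutation[OF assms] k_def by auto
  define f where "f = (\<lambda>i. (p ^^ i) a)"
  have s: "support p a = map f [0..<k]" unfolding f_def k_def by simp
  have "tl (map f [0..<k]) @ [hd (map f [0..<k])] = map (\<lambda>i. p (f i)) [0..<k]"
  proof (rule nth_equalityI)
    show "length (tl (map f [0..<k]) @ [hd (map f [0..<k])]) = length (map (\<lambda>i. p (f i)) [0..<k])"
      using k by simp
  next
    fix i assume "i < length (tl (map f [0..<k]) @ [hd (map f [0..<k])])"
    hence i: "i < k" using k by simp
    show "(tl (map f [0..<k]) @ [hd (map f [0..<k])]) ! i = map (\<lambda>i. p (f i)) [0..<k] ! i"
    proof (cases "i < k - 1")
      case True
      hence si: "Suc i < k" by simp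
      then show ?thesis using i True by (simp add: nth_append nth_tl f_def)
    next
      case False
      hence "i = k - 1" using i by simp
      moreover have "p (f (k - 1)) = a" using k unfolding f_def
        by (metis Suc_diff_1 funpow.simps(2) o_apply)
      ultimately show ?thesis using k by (simp add: nth_append hd_map f_def)
    qed
  qed
  hence "cycle_edges (support p a) = set (zip (map f [0..<k]) (map (\<lambda>i. p (f i)) [0..<k]))"
    unfolding cycle_edges_def s by simp
  also have "\<dots> = (\<lambda>x. (x, p x)) ` set (map f [0..<k])"
    by (simp add: zip_map_map zip_same_conv_map image_image)
  finally show ?thesis using s by simp
qed



lemma cover_in:
  assumes fin: "finite V" and ne: "V \<noteq> {}" and pV: "p permutes V" and pE: "\<forall>x\<in>V. (x, p x) \<in> E"
  shows "(V, (\<lambda>x. (x, p x)) ` V) \<in> cycle_subgraphs V E"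
proof -
  have pp: "permutation p" using fin pV permutation_permutes by blast
  have sub: "set (support p a) \<subseteq> V" if "a \<in> V" for a
  proof
    fix y assume "y \<in> set (support p a)"
    then obtain i where "y = (p ^^ i) a" using support_set[OF pp] by auto
    thus "y \<in> V" using permutes_in_image[OF permutes_funpow[OF pV, of i]] that by simp
  qed
  have ain: "a \<in> set (support p a)" for a
    using least_power_of_permutation(2)[OF pp, of a] by force
  define Orb where "Orb = (\<lambda>a. set (support p a)) ` V"
  have "finite Orb" unfolding Orb_def using fin by simp
  then obtain os where os: "set os = Orb" "distinct os" using finite_distinct_list by blast
  define rep where "rep = (\<lambda>q. SOME a. a \<in> V \<and> set (support p a) = q)"
  have rep: "rep q \<in> V \<and> set (support p (rep q)) = q" if "q \<in> Orb" for q
  proof -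
    have "\<exists>a. a \<in> V \<and> set (support p a) = q" using that unfolding Orb_def by blast
    thus ?thesis unfolding rep_def by (rule someI_ex)
  qed
  define cs where "cs = map (\<lambda>q. support p (rep q)) os"
  have cs_ne: "cs \<noteq> []" using ne os(1) unfolding cs_def Orb_def by auto
  have cyc: "\<forall>c\<in>set cs. is_cycle V E c"
  proof
    fix c assume "c \<in> set cs"
    then obtain q where q: "q \<in> Orb" "c = support p (rep q)" using os(1) cs_def by auto
    have rV: "rep q \<in> V" using rep[OF q(1)] by simp
    have "c \<noteq> []" using ain[of "rep q"] q(2) by auto
    moreover have "distinct c" using cycle_of_permutation[OF pp] q(2) by simp
    moreover have "set c \<subseteq> V" using sub[OF rV] q(2) by simp
    moreover have "cycle_edges c \<subseteq> E" using ce_support[OF pp, of "rep q"] q(2) sub[OF rV] pE by auto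
    ultimately show "is_cycle V E c" unfolding is_cycle_def by simp
  qed
  have dis: "\<forall>i<length cs. \<forall>j<length cs. i \<noteq> j \<longrightarrow> set (cs ! i) \<inter> set (cs ! j) = {}"
  proof (intro allI impI)
    fix i j assume ij: "i < length cs" "j < length cs" "i \<noteq> j"
    have l: "length cs = length os" unfolding cs_def by simp
    have oi: "os ! i \<in> Orb" "os ! j \<in> Orb" using ij l os(1) nth_mem by metis+
    have "os ! i \<noteq> os ! j" using os(2) ij l nth_eq_iff_index_eq by metis
    moreover have "set (cs ! i) = os ! i" "set (cs ! j) = os ! j"
      using rep[OF oi(1)] rep[OF oi(2)] ij l unfolding cs_def by auto
    ultimately show "set (cs ! i) \<inter> set (cs ! j) = {}"
    proof -
      have Or: "Orb \<subseteq> range (\<lambda>a. set (support p a))" unfolding Orb_def by blast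
      have a1: "os ! i \<in> range (\<lambda>a. set (support p a))" using Or oi(1) by (rule subsetD)
      have a2: "os ! j \<in> range (\<lambda>a. set (support p a))" using Or oi(2) by (rule subsetD)
      have "os ! i \<inter> os ! j = {}"
        by (rule disjointD[OF disjoint_support[OF pp] a1 a2 \<open>os ! i \<noteq> os ! j\<close>])
      thus ?thesis using \<open>set (cs ! i) = os ! i\<close> \<open>set (cs ! j) = os ! j\<close> by simp
    qed
  qed
  have setcs: "set ` set cs = Orb"
  proof -
    have "set ` set cs = (\<lambda>q. set (support p (rep q))) ` set os" unfolding cs_def by (simp add: image_image)
    also have "\<dots> = (\<lambda>q. q) ` Orb" using os(1) rep by (intro image_cong) auto
    finally show ?thesis by simp
  qed
  have U1: "(\<Union>c\<in>set cs. set c) = V"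
  proof -
    have "(\<Union>c\<in>set cs. set c) = \<Union> Orb" using setcs by auto
    also have "\<dots> = V"
    proof
      show "\<Union> Orb \<subseteq> V" unfolding Orb_def using sub by auto
      show "V \<subseteq> \<Union> Orb" unfolding Orb_def using ain by auto
    qed
    finally show ?thesis .
  qed
  have U2: "(\<Union>c\<in>set cs. cycle_edges c) = (\<lambda>x. (x, p x)) ` V"
  proof -
    have "\<forall>c\<in>set cs. cycle_edges c = (\<lambda>x. (x, p x)) ` set c"
      unfolding cs_def using ce_support[OF pp] by auto
    hence "(\<Union>c\<in>set cs. cycle_edges c) = (\<Union>c\<in>set cs. (\<lambda>x. (x, p x)) ` set c)" by auto
    also have "\<dots> = (\<lambda>x. (x, p x)) ` (\<Union>c\<in>set cs. set c)" by auto
    finally show ?thesis using U1 by simp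
  qed
  have mem: "\<exists>cs'. (V, (\<lambda>x. (x, p x)) ` V) = (\<Union>c\<in>set cs'. set c, \<Union>c\<in>set cs'. cycle_edges c) \<and>
        cs' \<noteq> [] \<and> (\<forall>c\<in>set cs'. is_cycle V E c) \<and>
        (\<forall>i<length cs'. \<forall>j<length cs'. i \<noteq> j \<longrightarrow> set (cs' ! i) \<inter> set (cs' ! j) = {})"
    by (intro exI[of _ cs] conjI) (simp add: U1 U2, fact cs_ne, fact cyc, fact dis)
  show ?thesis unfolding cycle_subgraphs_def using mem by (intro UnI2) simp
qed



lemma exists_perm:
  assumes dg: "digraph V E" and ds: "doubly_stochasticable V E" and uv: "(u,v) \<in> E"
  shows "\<exists>p. p permutes V \<and> p u = v \<and> (\<forall>x\<in>V. (x, p x) \<in> E)"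
proof -
  have fin: "finite V" and EV: "E \<subseteq> V \<times> V" using dg digraph_def by auto
  have uV: "u \<in> V" and vV: "v \<in> V" using uv EV by auto
  obtain A :: "'a \<Rightarrow> 'a \<Rightarrow> real" where A: "\<forall>x\<in>V. \<forall>y\<in>V. A x y \<ge> 0 \<and> (A x y > 0 \<longleftrightarrow> (x, y) \<in> E)"
    "\<forall>x\<in>V. (\<Sum>y\<in>V. A x y) = 1" "\<forall>y\<in>V. (\<Sum>x\<in>V. A x y) = 1"
    using ds unfolding doubly_stochasticable_def by blast
  define N where "N = (\<lambda>x. {w \<in> V - {v}. A x w > 0})"
  have hallc: "\<forall>X\<subseteq>V - {u}. card X \<le> card (\<Union>(N ` X))"
  proof (intro allI impI)
    fix X assume X: "X \<subseteq> V - {u}"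
    have fX: "finite X" using X fin finite_subset by blast
    define Y where "Y = {w \<in> V. \<exists>x\<in>X. A x w > 0}"
    have fY: "finite Y" using fin Y_def by simp
    have UN: "\<Union>(N ` X) = Y - {v}" unfolding N_def Y_def by auto
    have "real (card X) = (\<Sum>x\<in>X. (1::real))" by simp
    also have "\<dots> = (\<Sum>x\<in>X. \<Sum>w\<in>V. A x w)" using A(2) X by (intro sum.cong) auto
    also have "\<dots> = (\<Sum>x\<in>X. \<Sum>w\<in>Y. A x w)"
    proof (rule sum.cong[OF refl])
      fix x assume x: "x \<in> X"
      have "(\<Sum>w\<in>Y. A x w) = (\<Sum>w\<in>V. A x w)"
      proof (rule sum.mono_neutral_left[OF fin])
        show "Y \<subseteq> V" unfolding Y_def by auto
        show "\<forall>i\<in>V - Y. A x i = 0" using A(1) x X unfolding Y_def by force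
      qed
      thus "(\<Sum>w\<in>V. A x w) = (\<Sum>w\<in>Y. A x w)" by simp
    qed
    also have "\<dots> = (\<Sum>w\<in>Y. \<Sum>x\<in>X. A x w)" by (rule sum.swap)
    also have "\<dots> \<le> (\<Sum>w\<in>Y. 1 - A u w)"
    proof (rule sum_mono)
      fix w assume w: "w \<in> Y"
      hence wV: "w \<in> V" unfolding Y_def by auto
      have "(\<Sum>x\<in>X. A x w) \<le> (\<Sum>x\<in>V - {u}. A x w)"
        using X A(1) wV fin by (intro sum_mono2) auto
      also have "\<dots> = (\<Sum>x\<in>V. A x w) - A u w" using fin uV by (simp add: sum_diff1)
      finally show "(\<Sum>x\<in>X. A x w) \<le> 1 - A u w" using A(3) wV by simp
    qed
    also have "\<dots> = real (card Y) - (\<Sum>w\<in>Y. A u w)" by (simp add: sum_subtractf)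
    finally have ineq: "real (card X) \<le> real (card Y) - (\<Sum>w\<in>Y. A u w)" .
    show "card X \<le> card (\<Union>(N ` X))"
    proof (cases "v \<in> Y")
      case True
      have "(\<Sum>w\<in>Y. A u w) \<ge> A u v"
        using True fY A(1) uV unfolding Y_def
        by (intro member_le_sum) auto
      moreover have "A u v > 0" using A(1) uV vV uv by blast
      ultimately have "real (card X) < real (card Y)" using ineq by linarith
      hence "card X < card Y" by simp
      moreover have "card (Y - {v}) = card Y - 1" using True fY by simp
      ultimately show ?thesis using UN by simp
    next
      case False
      have "(\<Sum>w\<in>Y. A u w) \<ge> 0" using A(1) uV unfolding Y_def by (intro sum_nonneg) auto
      hence "card X \<le> card Y" using ineq by linarith
      thus ?thesis using UN False by simp
    qed
  qed
  have "\<forall>i\<in>V - {u}. finite (N i)" using fin N_def by simp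
  then obtain f where f: "inj_on f (V - {u})" "\<forall>i\<in>V - {u}. f i \<in> N i"
    using hall[of "V - {u}" N] fin hallc by blast
  define p where "p = (\<lambda>x. if x \<in> V then (if x = u then v else f x) else x)"
  have pim: "p ` V \<subseteq> V" using f(2) vV unfolding p_def N_def by auto
  have pinj: "inj_on p V"
  proof (rule inj_onI)
    fix a b assume ab: "a \<in> V" "b \<in> V" "p a = p b"
    show "a = b"
    proof (cases "a = u"; cases "b = u")
      assume "a = u" "b \<noteq> u" thus ?thesis using ab f(2) unfolding p_def N_def by force
    next
      assume "a \<noteq> u" "b = u" thus ?thesis using ab f(2) unfolding p_def N_def by force
    next
      assume "a \<noteq> u" "b \<noteq> u" thus ?thesis using ab f(1) unfolding p_def inj_on_def by auto
    qed simp
  qed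
  have "bij_betw p V V" using endo_inj_surj[OF fin pim pinj] pinj unfolding bij_betw_def by simp
  hence "p permutes V" by (rule bij_imp_permutes) (simp add: p_def)
  moreover have "p u = v" using uV p_def by simp
  moreover have "\<forall>x\<in>V. (x, p x) \<in> E"
  proof
    fix x assume x: "x \<in> V"
    show "(x, p x) \<in> E"
    proof (cases "x = u")
      case True thus ?thesis using uv x p_def by simp
    next
      case False
      hence "f x \<in> N x" using f(2) x by simp
      thus ?thesis using A(1) x False unfolding p_def N_def by auto
    qed
  qed
  ultimately show ?thesis by blast
qed



theorem lemma3p14:
  fixes V :: "'a set" and E :: "('a \<times> 'a) set"
  assumes "digraph V E" and "V \<noteq> {}"
    and "doubly_stochasticable V E" and "strongly_connected V E"
  shows "max (Max (d_out V E ` V)) (Max (d_in V E ` V)) \<le> ds V E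
         \<and> int (ds V E) \<le> int (card E) - int (card V) + 1"
proof -
  have fin: "finite V" and EV: "E \<subseteq> V \<times> V" using assms(1) digraph_def by auto
  have finE: "finite E" using EV fin finite_subset by blast
  obtain A :: "'a \<Rightarrow> 'a \<Rightarrow> real" where A: "\<forall>x\<in>V. \<forall>y\<in>V. A x y \<ge> 0 \<and> (A x y > 0 \<longleftrightarrow> (x, y) \<in> E)"
    "\<forall>x\<in>V. (\<Sum>y\<in>V. A x y) = 1"
    using assms(3) unfolding doubly_stochasticable_def by blast
  obtain v0 where v0: "v0 \<in> V" using assms(2) by blast
  have "\<exists>w\<in>V. A v0 w > 0"
  proof (rule ccontr)
    assume "\<not> ?thesis"
    hence "\<forall>w\<in>V. A v0 w = 0" using A(1) v0 by force
    hence "(\<Sum>y\<in>V. A v0 y) = 0" by simp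
    thus False using A(2) v0 by simp
  qed
  then obtain w0 where w0: "(v0, w0) \<in> E" using A(1) v0 by blast
  define gr :: "('a \<Rightarrow> 'a) \<Rightarrow> ('a \<times> 'a) set" where "gr = (\<lambda>p. (\<lambda>x. (x, p x)) ` V)"
  define good :: "('a \<Rightarrow> 'a) \<Rightarrow> bool" where "good = (\<lambda>p. p permutes V \<and> (\<forall>x\<in>V. (x, p x) \<in> E))"
  obtain p0 where p0: "good p0" using exists_perm[OF assms(1,3) w0] good_def by blast
  define pe where "pe = (\<lambda>e. SOME p. p permutes V \<and> p (fst e) = snd e \<and> (\<forall>x\<in>V. (x, p x) \<in> E))"
  have pe: "good (pe e) \<and> pe e (fst e) = snd e" if "e \<in> E" for e
  proof -
    have "\<exists>p. p permutes V \<and> p (fst e) = snd e \<and> (\<forall>x\<in>V. (x, p x) \<in> E)"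
      using exists_perm[OF assms(1,3), of "fst e" "snd e"] that by simp
    thus ?thesis unfolding pe_def good_def by (rule someI2_ex) blast
  qed
  have grE: "gr p \<subseteq> E" if "good p" for p using that unfolding good_def gr_def by auto
  have grC: "(V, gr p) \<in> cycle_subgraphs V E" if "good p" for p
    using cover_in[OF fin assms(2)] that unfolding good_def gr_def by blast
  have cgr: "card (gr p) = card V" for p
    unfolding gr_def by (rule card_image) (simp add: inj_on_def)
  define S0 where "S0 = insert (V, gr p0) ((\<lambda>e. (V, gr (pe e))) ` (E - gr p0))"
  have S0C: "S0 \<subseteq> cycle_subgraphs V E" unfolding S0_def using grC p0 pe by auto
  have S0f: "finite S0" unfolding S0_def using finE by simp
  have S0V: "\<forall>H\<in>S0. fst H = V" unfolding S0_def by auto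
  have S0g: "generates V E S0"
  proof -
    have "\<Union>(fst ` S0) = V" using S0V unfolding S0_def by auto
    moreover have "\<Union>(snd ` S0) = E"
    proof
      show "\<Union>(snd ` S0) \<subseteq> E" unfolding S0_def using grE p0 pe by auto
    next
      show "E \<subseteq> \<Union>(snd ` S0)"
      proof
        fix e assume e: "e \<in> E"
        show "e \<in> \<Union>(snd ` S0)"
        proof (cases "e \<in> gr p0")
          case True thus ?thesis unfolding S0_def by auto
        next
          case False
          have "fst e \<in> V" using e EV by auto
          hence "e \<in> gr (pe e)" using pe[OF e] unfolding gr_def
            by (metis (mono_tags, lifting) image_eqI prod.collapse)
          thus ?thesis using False e unfolding S0_def by auto
        qed
      qed
    qed
    ultimately show ?thesis unfolding generates_def by simp
  qed
  have cS0: "card S0 \<le> 1 + (card E - card V)"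
  proof -
    have "card S0 \<le> Suc (card ((\<lambda>e. (V, gr (pe e))) ` (E - gr p0)))"
      unfolding S0_def by (rule card_insert_le_m1) (simp_all add: finE)
    also have "\<dots> \<le> Suc (card (E - gr p0))" using card_image_le finE by auto
    also have "card (E - gr p0) = card E - card V"
      using card_Diff_subset[OF finite_subset[OF grE[OF p0] finE] grE[OF p0]] cgr by simp
    finally show ?thesis by simp
  qed
  have cVE: "card V \<le> card E" using card_mono[OF finE grE[OF p0]] cgr by simp
  let ?P = "\<lambda>n. \<exists>S. S \<subseteq> cycle_subgraphs V E \<and> finite S \<and> card S = n \<and>
                          generates V E S \<and> (\<forall>H\<in>S. fst H = V)"
  have P0: "?P (card S0)" using S0C S0f S0g S0V by blast
  have dsle: "ds V E \<le> card S0" unfolding ds_def by (rule Least_le) (rule P0)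
  have "?P (ds V E)" unfolding ds_def by (rule LeastI[of ?P, OF P0])
  then obtain S where S: "S \<subseteq> cycle_subgraphs V E" "finite S" "card S = ds V E"
    "generates V E S" by blast
  have Sn: "\<Union>(snd ` S) = E" using S(4) unfolding generates_def by simp
  have dout: "d_out V E v \<le> ds V E" for v
  proof -
    define W where "W = {w \<in> V. (v, w) \<in> E}"
    define g where "g = (\<lambda>w. SOME H. H \<in> S \<and> (v, w) \<in> snd H)"
    have g: "g w \<in> S \<and> (v, w) \<in> snd (g w)" if "w \<in> W" for w
    proof -
      have "\<exists>H. H \<in> S \<and> (v, w) \<in> snd H" using that Sn unfolding W_def by blast
      thus ?thesis unfolding g_def by (rule someI_ex)
    qed
    have "inj_on g W"
    proof (rule inj_onI)
      fix a b assume ab: "a \<in> W" "b \<in> W" "g a = g b"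
      show "a = b" using cs_succ_unique[of "g a" V E v a b] g[OF ab(1)] g[OF ab(2)] ab(3) S(1) by auto
    qed
    hence "card W \<le> card S" using g S(2) by (intro card_inj_on_le) auto
    thus ?thesis using S(3) unfolding d_out_def W_def by simp
  qed
  have din: "d_in V E v \<le> ds V E" for v
  proof -
    define W where "W = {w \<in> V. (w, v) \<in> E}"
    define g where "g = (\<lambda>w. SOME H. H \<in> S \<and> (w, v) \<in> snd H)"
    have g: "g w \<in> S \<and> (w, v) \<in> snd (g w)" if "w \<in> W" for w
    proof -
      have "\<exists>H. H \<in> S \<and> (w, v) \<in> snd H" using that Sn unfolding W_def by blast
      thus ?thesis unfolding g_def by (rule someI_ex)
    qed
    have "inj_on g W"
    proof (rule inj_onI)
      fix a b assume ab: "a \<in> W" "b \<in> W" "g a = g b"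
      show "a = b" using cs_pred_unique[of "g a" V E a v b] g[OF ab(1)] g[OF ab(2)] ab(3) S(1) by auto
    qed
    hence "card W \<le> card S" using g S(2) by (intro card_inj_on_le) auto
    thus ?thesis using S(3) unfolding d_in_def W_def by simp
  qed
  have "Max (d_out V E ` V) \<le> ds V E" using fin assms(2) dout by simp
  moreover have "Max (d_in V E ` V) \<le> ds V E" using fin assms(2) din by simp
  moreover have "int (ds V E) \<le> int (card E) - int (card V) + 1" using dsle cS0 cVE by linarith
  ultimately show ?thesis by simp
qed


end
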